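(* Let $\mathcal A$ be a linear time-invariant algorithm with state-space realization $(A,B,C,D)$ and oracle map $\phi$. If $\mathcal A$ converges to a fixed point $(y^\star,u^\star,x^\star)$, then for every $n\ge1$ its repetition $\mathcal A^n$ converges to the fixed point $(y',u',x^\star)$, where $y'=(y^\star,\dots,y^\star)$ and $u'=(u^\star,\dots,u^\star)$ consist of $n$ stacked copies of $y^\star$ and $u^\star$ respectively.
   Context: The algorithm $\mathcal A$ generates $x^{k+1}=Ax^k+Bu^k$, $y^k=Cx^k+Du^k$, $u^k=\phi(y^k)$. A fixed point of $\mathcal A$ is a triple $(y^\star,u^\star,x^\star)$ with $x^\star=Ax^\star+Bu^\star$, $y^\star=Cx^\star+Du^\star$, $u^\star=\phi(y^\star)$. The repetition $\mathcal A^n$ performs $n$ iterations of $\mathcal A$ as one iteration; its state is that of $\mathcal A$ and its oracle arguments/outputs in one iteration are $(y^{nk},\dots,y^{nk+n-1})$ and $(u^{nk},\dots,u^{nk+n-1})$ stacked; its realization is state matrix $A^n$, input matrix $[A^{n-1}B,\dots,AB,B]$, output matrix with block rows $C,CA,\dots,CA^{n-1}$, and feedthrough matrix with $(r,s)$ block $CA^{r-s-1}B$ for $r>s$, $D$ for $r=s$, $0$ for $r<s$; a fixed point of it is defined analogously (with oracle map $\phi$ applied blockwise). *)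

theory Defs
  imports "Jordan_Normal_Form.Matrix"
begin

definition lti_traj ::
  "real mat \<Rightarrow> real mat \<Rightarrow> real mat \<Rightarrow> real mat \<Rightarrow> (real vec \<Rightarrow> real vec)
   \<Rightarrow> (nat \<Rightarrow> real vec) \<Rightarrow> (nat \<Rightarrow> real vec) \<Rightarrow> (nat \<Rightarrow> real vec) \<Rightarrow> bool" where
  "lti_traj A B C D phi x y u \<longleftrightarrow>
     (\<forall>k. x (Suc k) = A *\<^sub>v x k + B *\<^sub>v u k \<and>
          y k = C *\<^sub>v x k + D *\<^sub>v u k \<and>
          u k = phi (y k))"

definition lti_fixed ::
  "real mat \<Rightarrow> real mat \<Rightarrow> real mat \<Rightarrow> real mat \<Rightarrow> (real vec \<Rightarrow> real vec)
   \<Rightarrow> real vec \<Rightarrow> real vec \<Rightarrow> real vec \<Rightarrow> bool" where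
  "lti_fixed A B C D phi ys us xs \<longleftrightarrow>
     xs = A *\<^sub>v xs + B *\<^sub>v us \<and> ys = C *\<^sub>v xs + D *\<^sub>v us \<and> us = phi ys"

definition vec_lim :: "(nat \<Rightarrow> real vec) \<Rightarrow> real vec \<Rightarrow> bool" where
  "vec_lim X v \<longleftrightarrow> (\<forall>i < dim_vec v. (\<lambda>k. X k $ i) \<longlonglongrightarrow> v $ i)"

definition lti_converges ::
  "nat \<Rightarrow> real mat \<Rightarrow> real mat \<Rightarrow> real mat \<Rightarrow> real mat \<Rightarrow> (real vec \<Rightarrow> real vec)
   \<Rightarrow> real vec \<Rightarrow> real vec \<Rightarrow> real vec \<Rightarrow> bool" where
  "lti_converges nx A B C D phi ys us xs \<longleftrightarrow>
     lti_fixed A B C D phi ys us xs \<and>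
     (\<forall>x y u. x 0 \<in> carrier_vec nx \<and> lti_traj A B C D phi x y u \<longrightarrow>
        vec_lim y ys \<and> vec_lim u us \<and> vec_lim x xs)"

definition rep_A :: "nat \<Rightarrow> real mat \<Rightarrow> real mat" where
  "rep_A n A = A ^\<^sub>m n"

text \<open>Input matrix [A^(n-1) B, ..., A B, B].\<close>
definition rep_B :: "nat \<Rightarrow> real mat \<Rightarrow> real mat \<Rightarrow> real mat" where
  "rep_B n A B = mat (dim_row B) (n * dim_col B)
     (\<lambda>(i, j). (A ^\<^sub>m (n - 1 - j div dim_col B) * B) $$ (i, j mod dim_col B))"

text \<open>Output matrix with block rows C, C A, ..., C A^(n-1).\<close>
definition rep_C :: "nat \<Rightarrow> real mat \<Rightarrow> real mat \<Rightarrow> real mat" where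
  "rep_C n A C = mat (n * dim_row C) (dim_col C)
     (\<lambda>(i, j). (C * A ^\<^sub>m (i div dim_row C)) $$ (i mod dim_row C, j))"

text \<open>Feedthrough matrix: block (r,s) is C A^(r-s-1) B if r > s, D if r = s, 0 if r < s.\<close>
definition rep_D :: "nat \<Rightarrow> real mat \<Rightarrow> real mat \<Rightarrow> real mat \<Rightarrow> real mat \<Rightarrow> real mat" where
  "rep_D n A B C D = mat (n * dim_row D) (n * dim_col D)
     (\<lambda>(i, j). let r = i div dim_row D; s = j div dim_col D;
                  a = i mod dim_row D; b = j mod dim_col D in
       if s < r then (C * A ^\<^sub>m (r - s - 1) * B) $$ (a, b)
       else if r = s then D $$ (a, b) else 0)"

definition rep_phi :: "nat \<Rightarrow> nat \<Rightarrow> nat \<Rightarrow> (real vec \<Rightarrow> real vec) \<Rightarrow> real vec \<Rightarrow> real vec" where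
  "rep_phi n p m phi Y = vec (n * m)
     (\<lambda>i. phi (vec p (\<lambda>j. Y $ ((i div m) * p + j))) $ (i mod m))"

definition stack :: "nat \<Rightarrow> real vec \<Rightarrow> real vec" where
  "stack n v = vec (n * dim_vec v) (\<lambda>i. v $ (i mod dim_vec v))"

end

theory Submission
  imports Defs
begin

lemma pow_mat_Suc_left:
  assumes "A \<in> carrier_mat n n" shows "A * A ^\<^sub>m k = A ^\<^sub>m (Suc k)"
  using assms
proof (induction k)
  case 0 then show ?case by simp
next
  case (Suc k)
  have "A * A ^\<^sub>m Suc k = A * (A ^\<^sub>m k * A)" by simp
  also have "\<dots> = (A * A ^\<^sub>m k) * A" using Suc.prems
    by (metis assoc_mult_mat pow_carrier_mat)
  also have "\<dots> = A ^\<^sub>m Suc (Suc k)" using Suc by simp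
  finally show ?case .
qed

primrec zz :: "real mat \<Rightarrow> real mat \<Rightarrow> (nat \<Rightarrow> real vec) \<Rightarrow> nat \<Rightarrow> real vec" where
  "zz A B u 0 = 0\<^sub>v (dim_row B)"
| "zz A B u (Suc r) = A *\<^sub>v zz A B u r + B *\<^sub>v u r"

lemma zz_carrier:
  assumes "A \<in> carrier_mat nx nx" "B \<in> carrier_mat nx nu"
  shows "zz A B u r \<in> carrier_vec nx"
proof (induction r)
  case 0 show ?case using assms(2) by simp
next
  case (Suc r)
  have "dim_vec (B *\<^sub>v u r) = nx" using assms(2) by simp
  hence "B *\<^sub>v u r \<in> carrier_vec nx" by (rule carrier_vecI)
  moreover have "A *\<^sub>v zz A B u r \<in> carrier_vec nx" using assms(1) Suc by (rule mult_mat_vec_carrier)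
  ultimately show ?case by simp
qed

lemma sum_split_blocks:
  "(\<Sum>j<n*m. f j) = (\<Sum>s<n. \<Sum>b<m. f (s*m+b)) " for f :: "nat \<Rightarrow> real"
proof (induction n)
  case 0 then show ?case by simp
next
  case (Suc n)
  have "(\<Sum>j<Suc n*m. f j) = (\<Sum>j\<in>{0..<n*m+m}. f j)"
    by (simp add: lessThan_atLeast0 add.commute)
  also have "\<dots> = (\<Sum>j\<in>{0..<n*m}. f j) + (\<Sum>j\<in>{n*m..<n*m+m}. f j)"
    by (rule sum.atLeastLessThan_concat[symmetric]) simp_all
  also have "(\<Sum>j\<in>{n*m..<n*m+m}. f j) = (\<Sum>b\<in>{0..<m}. f (n*m+b))"
    by (subst sum.atLeastLessThan_shift_0) (simp add: comp_def)
  also have "(\<Sum>j\<in>{0..<n*m}. f j) = (\<Sum>j<n*m. f j)" by (simp add: lessThan_atLeast0)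
  also have "(\<Sum>b\<in>{0..<m}. f (n*m+b)) = (\<Sum>b<m. f (n*m+b))" by (simp add: lessThan_atLeast0)
  finally show ?case using Suc by simp
qed

lemma zz_sum:
  assumes A: "A \<in> carrier_mat nx nx" and B: "B \<in> carrier_mat nx nu"
    and u: "\<And>s. u s \<in> carrier_vec nu"
  shows "\<And>M a. M \<in> carrier_mat k nx \<Longrightarrow> a < k \<Longrightarrow>
     (M *\<^sub>v zz A B u r) $ a = (\<Sum>s<r. ((M * A ^\<^sub>m (r - 1 - s) * B) *\<^sub>v u s) $ a)"
proof (induction r)
  case 0 then show ?case using B by (simp add: scalar_prod_def)
next
  case (Suc r)
  have z: "zz A B u r \<in> carrier_vec nx" using zz_carrier[OF A B] .
  have "M *\<^sub>v zz A B u (Suc r) = (M * A) *\<^sub>v zz A B u r + (M * B) *\<^sub>v u r"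
    using Suc.prems A B u z by (simp add: mult_add_distrib_mat_vec[of M k nx])
  hence "(M *\<^sub>v zz A B u (Suc r)) $ a = ((M * A) *\<^sub>v zz A B u r) $ a + ((M * B) *\<^sub>v u r) $ a"
    using Suc.prems A B by simp
  also have "((M * A) *\<^sub>v zz A B u r) $ a = (\<Sum>s<r. ((M * A * A ^\<^sub>m (r - 1 - s) * B) *\<^sub>v u s) $ a)"
    using Suc.IH[of "M * A" a] Suc.prems A by simp
  also have "\<dots> = (\<Sum>s<r. ((M * A ^\<^sub>m (Suc r - 1 - s) * B) *\<^sub>v u s) $ a)"
  proof (rule sum.cong[OF refl])
    fix s assume "s \<in> {..<r}"
    hence "Suc (r - 1 - s) = Suc r - 1 - s" by auto
    moreover have "M * A * A ^\<^sub>m (r - 1 - s) = M * A ^\<^sub>m Suc (r - 1 - s)"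
    proof -
      have "M * A * A ^\<^sub>m (r - 1 - s) = M * (A * A ^\<^sub>m (r - 1 - s))"
        using Suc.prems(1) A by (intro assoc_mult_mat) auto
      also have "A * A ^\<^sub>m (r - 1 - s) = A ^\<^sub>m Suc (r - 1 - s)" by (rule pow_mat_Suc_left[OF A])
      finally show ?thesis .
    qed
    ultimately show "((M * A * A ^\<^sub>m (r - 1 - s) * B) *\<^sub>v u s) $ a = ((M * A ^\<^sub>m (Suc r - 1 - s) * B) *\<^sub>v u s) $ a"
      by simp
  qed
  also have "((M * B) *\<^sub>v u r) $ a = ((M * A ^\<^sub>m (Suc r - 1 - r) * B) *\<^sub>v u r) $ a"
    using Suc.prems A by simp
  finally show ?case by simp
qed

definition blk :: "nat \<Rightarrow> real vec \<Rightarrow> nat \<Rightarrow> real vec" where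
  "blk m U s = vec m (\<lambda>b. U $ (s*m+b))"

lemma blk_carrier[simp]: "blk m U s \<in> carrier_vec m"
  by (simp add: blk_def)

lemma mv_sum: "i < dim_row M \<Longrightarrow> dim_vec v = dim_col M \<Longrightarrow> (M *\<^sub>v v) $ i = (\<Sum>j<dim_vec v. M $$ (i,j) * v $ j)"
  by (simp add: scalar_prod_def lessThan_atLeast0)

lemma blk_lt: "s < n \<Longrightarrow> b < m \<Longrightarrow> s*m+b < n*(m::nat)"
proof -
  assume "s < n" "b < m"
  hence "Suc s * m \<le> n * m" by (intro mult_le_mono1) simp
  hence "m + s * m \<le> n * m" by (simp only: mult_Suc)
  thus ?thesis using \<open>b < m\<close> by linarith
qed
lemma rep_B_dims[simp]: "dim_row (rep_B n A B) = dim_row B" "dim_col (rep_B n A B) = n * dim_col B"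
  by (simp_all add: rep_B_def)
lemma rep_B_idx: "i < dim_row B \<Longrightarrow> j < n * dim_col B \<Longrightarrow>
  rep_B n A B $$ (i,j) = (A ^\<^sub>m (n - 1 - j div dim_col B) * B) $$ (i, j mod dim_col B)"
  unfolding rep_B_def by simp
lemma zz_dim: "A \<in> carrier_mat nx nx \<Longrightarrow> B \<in> carrier_mat nx nu \<Longrightarrow> dim_vec (zz A B u r) = nx"
  by (rule carrier_vecD[OF zz_carrier])
lemma rep_B_mult:
  assumes A: "A \<in> carrier_mat nx nx" and B: "B \<in> carrier_mat nx nu"
    and U: "U \<in> carrier_vec (n*nu)"
  shows "rep_B n A B *\<^sub>v U = zz A B (blk nu U) n"
proof (rule eq_vecI)
  have Br: "dim_row B = nx" and Bc: "dim_col B = nu" using carrier_matD[OF B] by auto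
  have Ud: "dim_vec U = n * nu" using carrier_vecD[OF U] .
  show "dim_vec (rep_B n A B *\<^sub>v U) = dim_vec (zz A B (blk nu U) n)"
    using zz_dim[OF A B] Br by simp
  fix i assume "i < dim_vec (zz A B (blk nu U) n)"
  hence i: "i < nx" using zz_dim[OF A B] by simp
  have "(rep_B n A B *\<^sub>v U) $ i = (\<Sum>j<n*nu. rep_B n A B $$ (i,j) * U $ j)"
    using i Br Bc Ud by (subst mv_sum) simp_all
  also have "\<dots> = (\<Sum>s<n. \<Sum>b<nu. rep_B n A B $$ (i,s*nu+b) * U $ (s*nu+b))"
    by (rule sum_split_blocks)
  also have "\<dots> = (\<Sum>s<n. ((A ^\<^sub>m (n - 1 - s) * B) *\<^sub>v blk nu U s) $ i)"
  proof (rule sum.cong[OF refl])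
    fix s assume s: "s \<in> {..<n}"
    have "((A ^\<^sub>m (n - 1 - s) * B) *\<^sub>v blk nu U s) $ i
        = (\<Sum>b<nu. (A ^\<^sub>m (n - 1 - s) * B) $$ (i,b) * blk nu U s $ b)"
      using i A Br Bc by (subst mv_sum) (simp_all add: blk_def)
    also have "\<dots> = (\<Sum>b<nu. rep_B n A B $$ (i,s*nu+b) * U $ (s*nu+b))"
    proof (rule sum.cong[OF refl])
      fix b assume b: "b \<in> {..<nu}"
      have lt: "s*nu+b < n*nu" using s b by (simp add: blk_lt)
      have d: "(s*nu+b) div nu = s" and m: "(s*nu+b) mod nu = b" using b by auto
      show "(A ^\<^sub>m (n - 1 - s) * B) $$ (i,b) * blk nu U s $ b = rep_B n A B $$ (i,s*nu+b) * U $ (s*nu+b)"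
        using b lt by (simp add: rep_B_idx i Br Bc d m blk_def)
    qed
    finally show "(\<Sum>b<nu. rep_B n A B $$ (i,s*nu+b) * U $ (s*nu+b)) = ((A ^\<^sub>m (n - 1 - s) * B) *\<^sub>v blk nu U s) $ i" by simp
  qed
  also have "\<dots> = (1\<^sub>m nx *\<^sub>v zz A B (blk nu U) n) $ i"
  proof -
    have "(1\<^sub>m nx *\<^sub>v zz A B (blk nu U) n) $ i = (\<Sum>s<n. ((1\<^sub>m nx * A ^\<^sub>m (n - 1 - s) * B) *\<^sub>v blk nu U s) $ i)"
      using zz_sum[where u="blk nu U" and M="1\<^sub>m nx" and a=i and k=nx and r=n, OF A B blk_carrier] i by simp
    also have "\<dots> = (\<Sum>s<n. ((A ^\<^sub>m (n - 1 - s) * B) *\<^sub>v blk nu U s) $ i)"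
      using A by simp
    finally show ?thesis by simp
  qed
  also have "\<dots> = zz A B (blk nu U) n $ i" using zz_carrier[OF A B] by simp
  finally show "(rep_B n A B *\<^sub>v U) $ i = zz A B (blk nu U) n $ i" .
qed

lemma rep_C_idx: "dim_row C = ny \<Longrightarrow> r < n \<Longrightarrow> a < ny \<Longrightarrow> j < dim_col C \<Longrightarrow>
  rep_C n A C $$ (r*ny+a, j) = (C * A ^\<^sub>m r) $$ (a, j)"
  unfolding rep_C_def by (simp add: blk_lt)

lemma rep_C_dims[simp]: "dim_row (rep_C n A C) = n * dim_row C" "dim_col (rep_C n A C) = dim_col C"
  by (simp_all add: rep_C_def)

lemma rep_D_dims[simp]: "dim_row (rep_D n A B C D) = n * dim_row D" "dim_col (rep_D n A B C D) = n * dim_col D"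
  by (simp_all add: rep_D_def)

lemma rep_D_idx: "dim_row D = ny \<Longrightarrow> dim_col D = nu \<Longrightarrow> r < n \<Longrightarrow> a < ny \<Longrightarrow> s < n \<Longrightarrow> b < nu \<Longrightarrow>
  rep_D n A B C D $$ (r*ny+a, s*nu+b) =
    (if s < r then (C * A ^\<^sub>m (r - 1 - s) * B) $$ (a, b) else if s = r then D $$ (a, b) else 0)"
  unfolding rep_D_def Let_def by (simp add: blk_lt)

lemma rep_out:
  assumes A: "A \<in> carrier_mat nx nx" and B: "B \<in> carrier_mat nx nu"
    and C: "C \<in> carrier_mat ny nx" and D: "D \<in> carrier_mat ny nu"
    and X: "X \<in> carrier_vec nx" and U: "U \<in> carrier_vec (n*nu)" and r: "r < n"
  shows "blk ny (rep_C n A C *\<^sub>v X + rep_D n A B C D *\<^sub>v U) r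
       = C *\<^sub>v (A ^\<^sub>m r *\<^sub>v X + zz A B (blk nu U) r) + D *\<^sub>v blk nu U r"
proof (rule eq_vecI)
  have Br: "dim_row B = nx" and Bc: "dim_col B = nu" using carrier_matD[OF B] by auto
  have Cr: "dim_row C = ny" and Cc: "dim_col C = nx" using carrier_matD[OF C] by auto
  have Dr: "dim_row D = ny" and Dc: "dim_col D = nu" using carrier_matD[OF D] by auto
  have Ud: "dim_vec U = n * nu" using carrier_vecD[OF U] .
  have Xd: "dim_vec X = nx" using carrier_vecD[OF X] .
  show "dim_vec (blk ny (rep_C n A C *\<^sub>v X + rep_D n A B C D *\<^sub>v U) r) =
    dim_vec (C *\<^sub>v (A ^\<^sub>m r *\<^sub>v X + zz A B (blk nu U) r) + D *\<^sub>v blk nu U r)"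
    by (simp add: blk_def Dr)
  fix a assume "a < dim_vec (C *\<^sub>v (A ^\<^sub>m r *\<^sub>v X + zz A B (blk nu U) r) + D *\<^sub>v blk nu U r)"
  hence a: "a < ny" by (simp add: Dr)
  have lt: "r*ny+a < n*ny" using r a by (rule blk_lt)
  have L: "blk ny (rep_C n A C *\<^sub>v X + rep_D n A B C D *\<^sub>v U) r $ a
     = (rep_C n A C *\<^sub>v X) $ (r*ny+a) + (rep_D n A B C D *\<^sub>v U) $ (r*ny+a)"
    using a lt by (simp add: blk_def Dr)
  have P1: "(rep_C n A C *\<^sub>v X) $ (r*ny+a) = (C *\<^sub>v (A ^\<^sub>m r *\<^sub>v X)) $ a"
  proof -
    have "(rep_C n A C *\<^sub>v X) $ (r*ny+a) = (\<Sum>j<nx. rep_C n A C $$ (r*ny+a, j) * X $ j)"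
      using lt Cr Cc Xd by (subst mv_sum) simp_all
    also have "\<dots> = (\<Sum>j<nx. (C * A ^\<^sub>m r) $$ (a, j) * X $ j)"
      using rep_C_idx[OF Cr r a] Cc by simp
    also have "\<dots> = ((C * A ^\<^sub>m r) *\<^sub>v X) $ a"
      using a Cr A Xd by (subst mv_sum) simp_all
    also have "\<dots> = (C *\<^sub>v (A ^\<^sub>m r *\<^sub>v X)) $ a"
      using C A X by (subst assoc_mult_mat_vec[of C ny nx "A ^\<^sub>m r" nx X]) auto
    finally show ?thesis .
  qed
  have P2: "(rep_D n A B C D *\<^sub>v U) $ (r*ny+a)
     = (\<Sum>s<r. ((C * A ^\<^sub>m (r - 1 - s) * B) *\<^sub>v blk nu U s) $ a) + (D *\<^sub>v blk nu U r) $ a"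
  proof -
    have "(rep_D n A B C D *\<^sub>v U) $ (r*ny+a) = (\<Sum>j<n*nu. rep_D n A B C D $$ (r*ny+a, j) * U $ j)"
      using lt Dr Dc Ud by (subst mv_sum) simp_all
    also have "\<dots> = (\<Sum>s<n. \<Sum>b<nu. rep_D n A B C D $$ (r*ny+a, s*nu+b) * U $ (s*nu+b))"
      by (rule sum_split_blocks)
    also have "\<dots> = (\<Sum>s<n. (if s < r then ((C * A ^\<^sub>m (r - 1 - s) * B) *\<^sub>v blk nu U s) $ a else 0)
                        + (if s = r then (D *\<^sub>v blk nu U r) $ a else 0))"
    proof (rule sum.cong[OF refl])
      fix s assume s: "s \<in> {..<n}"
      have e1: "((C * A ^\<^sub>m (r - Suc s) * B) *\<^sub>v blk nu U s) $ a
          = (\<Sum>b<nu. (C * A ^\<^sub>m (r - Suc s) * B) $$ (a,b) * blk nu U s $ b)"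
        using a Cr Bc by (subst mv_sum) (simp_all add: blk_def)
      have e2: "(D *\<^sub>v blk nu U r) $ a = (\<Sum>b<nu. D $$ (a,b) * blk nu U s $ b)" if "s = r"
        using a Dr Dc that by (subst mv_sum) (simp_all add: blk_def)
      have e3: "blk nu U s $ b = U $ (s*nu+b)" if "b < nu" for b
        using that by (simp add: blk_def)
      show "(\<Sum>b<nu. rep_D n A B C D $$ (r*ny+a, s*nu+b) * U $ (s*nu+b)) =
         (if s < r then ((C * A ^\<^sub>m (r - 1 - s) * B) *\<^sub>v blk nu U s) $ a else 0)
                        + (if s = r then (D *\<^sub>v blk nu U r) $ a else 0)"
      proof -
        have "(\<Sum>b<nu. rep_D n A B C D $$ (r*ny+a, s*nu+b) * U $ (s*nu+b)) =
          (\<Sum>b<nu. (if s < r then (C * A ^\<^sub>m (r - 1 - s) * B) $$ (a, b) else if s = r then D $$ (a, b) else 0) * blk nu U s $ b)"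
        proof (rule sum.cong[OF refl])
          fix b assume b: "b \<in> {..<nu}"
          show "rep_D n A B C D $$ (r*ny+a, s*nu+b) * U $ (s*nu+b) =
            (if s < r then (C * A ^\<^sub>m (r - 1 - s) * B) $$ (a, b) else if s = r then D $$ (a, b) else 0) * blk nu U s $ b"
            using s b rep_D_idx[OF Dr Dc r a, of s b A B C] e3[of b] by simp
        qed
        also have "\<dots> = (if s < r then ((C * A ^\<^sub>m (r - 1 - s) * B) *\<^sub>v blk nu U s) $ a else 0)
                        + (if s = r then (D *\<^sub>v blk nu U r) $ a else 0)"
          by (cases "s < r"; cases "s = r") (simp_all add: e1 e2)
        finally show ?thesis .
      qed
    qed
    also have "\<dots> = (\<Sum>s<n. (if s < r then ((C * A ^\<^sub>m (r - 1 - s) * B) *\<^sub>v blk nu U s) $ a else 0))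
                        + (\<Sum>s<n. (if s = r then (D *\<^sub>v blk nu U r) $ a else 0))"
      by (rule sum.distrib)
    also have "(\<Sum>s<n. (if s < r then ((C * A ^\<^sub>m (r - 1 - s) * B) *\<^sub>v blk nu U s) $ a else 0))
       = (\<Sum>s\<in>{s\<in>{..<n}. s < r}. ((C * A ^\<^sub>m (r - 1 - s) * B) *\<^sub>v blk nu U s) $ a)"
      by (rule sum.inter_filter[symmetric]) simp
    also have "{s\<in>{..<n}. s < r} = {..<r}" using r by auto
    also have "(\<Sum>s<n. (if s = r then (D *\<^sub>v blk nu U r) $ a else 0)) = (D *\<^sub>v blk nu U r) $ a"
      using r by simp
    finally show ?thesis .
  qed
  have R: "(C *\<^sub>v (A ^\<^sub>m r *\<^sub>v X + zz A B (blk nu U) r) + D *\<^sub>v blk nu U r) $ a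
     = (C *\<^sub>v (A ^\<^sub>m r *\<^sub>v X)) $ a + (C *\<^sub>v zz A B (blk nu U) r) $ a + (D *\<^sub>v blk nu U r) $ a"
  proof -
    have "C *\<^sub>v (A ^\<^sub>m r *\<^sub>v X + zz A B (blk nu U) r) = C *\<^sub>v (A ^\<^sub>m r *\<^sub>v X) + C *\<^sub>v zz A B (blk nu U) r"
      using C mult_mat_vec_carrier[OF pow_carrier_mat[OF A] X] zz_carrier[OF A B] by (intro mult_add_distrib_mat_vec) auto
    thus ?thesis using a Cr Dr by simp
  qed
  have Z: "(C *\<^sub>v zz A B (blk nu U) r) $ a = (\<Sum>s<r. ((C * A ^\<^sub>m (r - 1 - s) * B) *\<^sub>v blk nu U s) $ a)"
    by (rule zz_sum[where u="blk nu U", OF A B blk_carrier C a])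
  show "blk ny (rep_C n A C *\<^sub>v X + rep_D n A B C D *\<^sub>v U) r $ a =
    (C *\<^sub>v (A ^\<^sub>m r *\<^sub>v X + zz A B (blk nu U) r) + D *\<^sub>v blk nu U r) $ a"
    unfolding L P1 P2 R Z by simp
qed

primrec xt :: "real mat \<Rightarrow> real mat \<Rightarrow> (nat \<Rightarrow> real vec) \<Rightarrow> real vec \<Rightarrow> nat \<Rightarrow> real vec" where
  "xt A B u x0 0 = x0"
| "xt A B u x0 (Suc t) = A *\<^sub>v xt A B u x0 t + B *\<^sub>v u t"

lemma xt_carrier:
  assumes A: "A \<in> carrier_mat nx nx" and B: "B \<in> carrier_mat nx nu" and x0: "x0 \<in> carrier_vec nx"
  shows "xt A B u x0 t \<in> carrier_vec nx"
proof (induction t)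
  case 0 show ?case using x0 by simp
next
  case (Suc t)
  have "dim_vec (B *\<^sub>v u t) = nx" using B by simp
  hence "B *\<^sub>v u t \<in> carrier_vec nx" by (rule carrier_vecI)
  moreover have "A *\<^sub>v xt A B u x0 t \<in> carrier_vec nx" using A Suc by (rule mult_mat_vec_carrier)
  ultimately show ?case by simp
qed

lemma xt_shift:
  assumes A: "A \<in> carrier_mat nx nx" and B: "B \<in> carrier_mat nx nu" and x0: "x0 \<in> carrier_vec nx"
  shows "xt A B u x0 (m + r) = A ^\<^sub>m r *\<^sub>v xt A B u x0 m + zz A B (\<lambda>s. u (m+s)) r"
proof (induction r)
  case 0
  have "xt A B u x0 m \<in> carrier_vec nx" by (rule xt_carrier[OF A B x0])
  moreover have "dim_row B = nx" using B by auto
  ultimately show ?case using A by simp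
next
  case (Suc r)
  let ?v = "xt A B u x0 m" and ?z = "zz A B (\<lambda>s. u (m+s)) r"
  have v: "?v \<in> carrier_vec nx" by (rule xt_carrier[OF A B x0])
  have z: "?z \<in> carrier_vec nx" by (rule zz_carrier[OF A B])
  have Av: "A ^\<^sub>m r *\<^sub>v ?v \<in> carrier_vec nx" using pow_carrier_mat[OF A] v by (rule mult_mat_vec_carrier)
  have w: "B *\<^sub>v u (m + r) \<in> carrier_vec nx" using B by (intro carrier_vecI) simp
  have "xt A B u x0 (m + Suc r) = A *\<^sub>v (A ^\<^sub>m r *\<^sub>v ?v + ?z) + B *\<^sub>v u (m + r)"
    using Suc by simp
  also have "\<dots> = (A *\<^sub>v (A ^\<^sub>m r *\<^sub>v ?v) + A *\<^sub>v ?z) + B *\<^sub>v u (m + r)"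
    using A Av z by (simp add: mult_add_distrib_mat_vec)
  also have "\<dots> = A *\<^sub>v (A ^\<^sub>m r *\<^sub>v ?v) + (A *\<^sub>v ?z + B *\<^sub>v u (m + r))"
    using A Av z w by (intro assoc_add_vec[of _ nx]) auto
  also have "A *\<^sub>v (A ^\<^sub>m r *\<^sub>v ?v) = A ^\<^sub>m Suc r *\<^sub>v ?v"
  proof -
    have "A *\<^sub>v (A ^\<^sub>m r *\<^sub>v ?v) = (A * A ^\<^sub>m r) *\<^sub>v ?v"
      using A v by (intro assoc_mult_mat_vec[symmetric]) auto
    thus ?thesis by (simp add: pow_mat_Suc_left[OF A])
  qed
  finally show ?case by simp
qed

lemma zz_cong: "(\<And>s. s < r \<Longrightarrow> u s = v s) \<Longrightarrow> zz A B u r = zz A B v r"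
  by (induction r) auto

lemma xt_const:
  assumes "xs = A *\<^sub>v xs + B *\<^sub>v us"
  shows "xt A B (\<lambda>_. us) xs t = xs"
  using assms by (induction t) auto

lemma blk_rep_phi:
  assumes ph: "\<forall>v \<in> carrier_vec ny. phi v \<in> carrier_vec nu" and r: "r < n"
  shows "blk nu (rep_phi n ny nu phi Y) r = phi (blk ny Y r)"
proof (rule eq_vecI)
  have "phi (blk ny Y r) \<in> carrier_vec nu" using ph by simp
  hence d: "dim_vec (phi (blk ny Y r)) = nu" by (rule carrier_vecD)
  show "dim_vec (blk nu (rep_phi n ny nu phi Y) r) = dim_vec (phi (blk ny Y r))"
    using d by (simp add: blk_def)
  fix b assume "b < dim_vec (phi (blk ny Y r))"
  hence b: "b < nu" using d by simp
  have lt: "r*nu+b < n*nu" using r b by (rule blk_lt)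
  have dd: "(r*nu+b) div nu = r" and mm: "(r*nu+b) mod nu = b" using b by auto
  show "blk nu (rep_phi n ny nu phi Y) r $ b = phi (blk ny Y r) $ b"
    using b lt by (simp add: blk_def rep_phi_def dd mm)
qed

lemma sub_lim:
  assumes "f \<longlonglongrightarrow> L" and "(n::nat) \<ge> 1"
  shows "(\<lambda>k. f (n*k + r)) \<longlonglongrightarrow> L"
proof -
  have "strict_mono (\<lambda>k. n*k + r)" using assms(2) by (intro strict_monoI) simp
  from LIMSEQ_subseq_LIMSEQ[OF assms(1) this] show ?thesis by (simp add: comp_def)
qed

theorem proposition7p3:
  fixes A B C D :: "real mat" and phi :: "real vec \<Rightarrow> real vec"
    and nx nu ny n :: nat and ys us xs :: "real vec"
  assumes "A \<in> carrier_mat nx nx" and "B \<in> carrier_mat nx nu"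
    and "C \<in> carrier_mat ny nx" and "D \<in> carrier_mat ny nu"
    and "\<forall>v \<in> carrier_vec ny. phi v \<in> carrier_vec nu"
    and "ys \<in> carrier_vec ny" and "us \<in> carrier_vec nu" and "xs \<in> carrier_vec nx"
    and "lti_converges nx A B C D phi ys us xs"
    and "n \<ge> 1"
  shows "lti_converges nx (rep_A n A) (rep_B n A B) (rep_C n A C) (rep_D n A B C D)
           (rep_phi n ny nu phi) (stack n ys) (stack n us) xs"
proof -
  note A = assms(1) and B = assms(2) and C = assms(3) and D = assms(4) and ph = assms(5)
    and ysc = assms(6) and usc = assms(7) and xsc = assms(8) and n1 = assms(10)
  have Br: "dim_row B = nx" and Bc: "dim_col B = nu" using carrier_matD[OF B] by auto
  have Cr: "dim_row C = ny" and Cc: "dim_col C = nx" using carrier_matD[OF C] by auto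
  have Dr: "dim_row D = ny" and Dc: "dim_col D = nu" using carrier_matD[OF D] by auto
  have ysd: "dim_vec ys = ny" using carrier_vecD[OF ysc] .
  have usd: "dim_vec us = nu" using carrier_vecD[OF usc] .
  have xsd: "dim_vec xs = nx" using carrier_vecD[OF xsc] .
  have fix0: "lti_fixed A B C D phi ys us xs"
    and conv: "\<And>x y u. x 0 \<in> carrier_vec nx \<Longrightarrow> lti_traj A B C D phi x y u \<Longrightarrow>
        vec_lim y ys \<and> vec_lim u us \<and> vec_lim x xs"
    using assms(9) unfolding lti_converges_def by blast+
  have fx: "xs = A *\<^sub>v xs + B *\<^sub>v us" and fy: "ys = C *\<^sub>v xs + D *\<^sub>v us" and fu: "us = phi ys"
    using fix0 unfolding lti_fixed_def by blast+
  have stack_blk: "blk m (stack n v) r = v" if "r < n" "dim_vec v = m" for v m r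
  proof (rule eq_vecI)
    show "dim_vec (blk m (stack n v) r) = dim_vec v" using that by (simp add: blk_def)
    fix b assume "b < dim_vec v"
    hence b: "b < m" using that by simp
    have lt: "r*m+b < n*m" using that(1) b by (rule blk_lt)
    have mm: "(r*m+b) mod m = b" using b by auto
    show "blk m (stack n v) r $ b = v $ b" using b lt that by (simp add: blk_def stack_def mm)
  qed
  have stack_c: "stack n us \<in> carrier_vec (n*nu)" by (intro carrier_vecI) (simp add: stack_def usd)
  have xs_sh: "xs = A ^\<^sub>m r *\<^sub>v xs + zz A B (\<lambda>s. us) r" for r
    using xt_shift[OF A B xsc, of "\<lambda>_. us" 0 r] xt_const[OF fx] by simp
  have idx: "i = (i div m) * m + i mod m" for i m :: nat by simp
  have F1: "xs = rep_A n A *\<^sub>v xs + rep_B n A B *\<^sub>v stack n us"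
  proof -
    have "rep_B n A B *\<^sub>v stack n us = zz A B (blk nu (stack n us)) n"
      by (rule rep_B_mult[OF A B stack_c])
    also have "\<dots> = zz A B (\<lambda>s. us) n" by (rule zz_cong) (simp add: stack_blk usd)
    finally show ?thesis using xs_sh[of n] by (simp add: rep_A_def)
  qed
  have F2: "stack n ys = rep_C n A C *\<^sub>v xs + rep_D n A B C D *\<^sub>v stack n us"
  proof (rule eq_vecI)
    show "dim_vec (stack n ys) = dim_vec (rep_C n A C *\<^sub>v xs + rep_D n A B C D *\<^sub>v stack n us)"
      by (simp add: stack_def ysd Dr)
    fix i assume "i < dim_vec (rep_C n A C *\<^sub>v xs + rep_D n A B C D *\<^sub>v stack n us)"
    hence i: "i < n * ny" by (simp add: Dr)
    hence ny0: "ny > 0" by (cases ny) auto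
    define r a where "r = i div ny" and "a = i mod ny"
    have r: "r < n" using i unfolding r_def by (simp add: less_mult_imp_div_less)
    have a: "a < ny" using ny0 unfolding a_def by simp
    have ie: "i = r*ny + a" unfolding r_def a_def by simp
    have "(rep_C n A C *\<^sub>v xs + rep_D n A B C D *\<^sub>v stack n us) $ i
       = blk ny (rep_C n A C *\<^sub>v xs + rep_D n A B C D *\<^sub>v stack n us) r $ a"
      using a by (simp add: blk_def ie)
    also have "\<dots> = (C *\<^sub>v (A ^\<^sub>m r *\<^sub>v xs + zz A B (blk nu (stack n us)) r) + D *\<^sub>v blk nu (stack n us) r) $ a"
      by (subst rep_out[OF A B C D xsc stack_c r]) simp
    also have "zz A B (blk nu (stack n us)) r = zz A B (\<lambda>s. us) r"
      by (rule zz_cong) (use r in \<open>simp add: stack_blk usd\<close>)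
    also have "blk nu (stack n us) r = us" using r by (simp add: stack_blk usd)
    also have "A ^\<^sub>m r *\<^sub>v xs + zz A B (\<lambda>s. us) r = xs" using xs_sh[of r] by simp
    also have "(C *\<^sub>v xs + D *\<^sub>v us) $ a = ys $ a" using fy by simp
    also have "ys $ a = stack n ys $ i" using i by (simp add: stack_def ysd a_def)
    finally show "stack n ys $ i = (rep_C n A C *\<^sub>v xs + rep_D n A B C D *\<^sub>v stack n us) $ i" by simp
  qed
  have F3: "stack n us = rep_phi n ny nu phi (stack n ys)"
  proof (rule eq_vecI)
    show "dim_vec (stack n us) = dim_vec (rep_phi n ny nu phi (stack n ys))"
      by (simp add: stack_def usd rep_phi_def)
    fix i assume "i < dim_vec (rep_phi n ny nu phi (stack n ys))"
    hence i: "i < n * nu" by (simp add: rep_phi_def)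
    hence nu0: "nu > 0" by (cases nu) auto
    have r: "i div nu < n" using i by (simp add: less_mult_imp_div_less)
    have "vec ny (\<lambda>j. stack n ys $ ((i div nu) * ny + j)) = ys"
    proof (rule eq_vecI)
      fix j assume "j < dim_vec ys"
      hence j: "j < ny" by (simp add: ysd)
      have lt: "(i div nu) * ny + j < n * ny" using r j by (rule blk_lt)
      have mm: "((i div nu) * ny + j) mod ny = j" using j by auto
      show "vec ny (\<lambda>j. stack n ys $ ((i div nu) * ny + j)) $ j = ys $ j"
        using j lt by (simp add: stack_def ysd mm)
    qed (simp add: ysd)
    hence "rep_phi n ny nu phi (stack n ys) $ i = phi ys $ (i mod nu)"
      using i by (simp add: rep_phi_def)
    moreover have "stack n us $ i = us $ (i mod nu)" using i by (simp add: stack_def usd)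
    ultimately show "stack n us $ i = rep_phi n ny nu phi (stack n ys) $ i"
      using fu by simp
  qed
  have FIX: "lti_fixed (rep_A n A) (rep_B n A B) (rep_C n A C) (rep_D n A B C D)
           (rep_phi n ny nu phi) (stack n ys) (stack n us) xs"
    unfolding lti_fixed_def using F1 F2 F3 by blast
  have CONV: "vec_lim Y (stack n ys) \<and> vec_lim U (stack n us) \<and> vec_lim X xs"
    if X0: "X 0 \<in> carrier_vec nx"
      and tr: "lti_traj (rep_A n A) (rep_B n A B) (rep_C n A C) (rep_D n A B C D) (rep_phi n ny nu phi) X Y U"
    for X Y U
  proof -
    have Xs: "X (Suc k) = A ^\<^sub>m n *\<^sub>v X k + rep_B n A B *\<^sub>v U k"
      and Ys: "Y k = rep_C n A C *\<^sub>v X k + rep_D n A B C D *\<^sub>v U k"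
      and Us: "U k = rep_phi n ny nu phi (Y k)" for k
      using tr unfolding lti_traj_def rep_A_def by blast+
    have Uc: "U k \<in> carrier_vec (n*nu)" for k
      using Us[of k] by (intro carrier_vecI) (simp add: rep_phi_def)
    have Xc: "X k \<in> carrier_vec nx" for k
    proof (induction k)
      case 0 show ?case by (rule X0)
    next
      case (Suc k) show ?case using Xs[of k] Br by (intro carrier_vecI) simp
    qed
    define u where "u t = blk nu (U (t div n)) (t mod n)" for t
    define x where "x = xt A B u (X 0)"
    define y where "y t = C *\<^sub>v x t + D *\<^sub>v u t" for t
    have n0: "n > 0" using n1 by simp
    have ublk: "u (n*k + r) = blk nu (U k) r" if "r < n" for k r
    proof -
      have "(n*k + r) div n = k" "(n*k + r) mod n = r" using that n0 by auto
      thus ?thesis by (simp add: u_def)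
    qed
    have xk: "x (n*k + r) = A ^\<^sub>m r *\<^sub>v X k + zz A B (blk nu (U k)) r \<and> X k = x (n*k)" if "r \<le> n" for k r
      using that
    proof (induction k arbitrary: r)
      case 0
      have "x (0 + r) = A ^\<^sub>m r *\<^sub>v x 0 + zz A B (\<lambda>s. u (0+s)) r"
        unfolding x_def by (rule xt_shift[OF A B X0])
      also have "zz A B (\<lambda>s. u (0+s)) r = zz A B (blk nu (U 0)) r"
      proof (rule zz_cong)
        fix s assume "s < r" hence "s < n" using 0 by simp
        thus "u (0+s) = blk nu (U 0) s" using ublk[of s 0] by simp
      qed
      finally have "x (0 + r) = A ^\<^sub>m r *\<^sub>v x 0 + zz A B (blk nu (U 0)) r" .
      moreover have "x 0 = X 0" unfolding x_def by simp
      ultimately show ?case by simp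
    next
      case (Suc k)
      have IH: "X k = x (n*k)" using conjunct2[OF Suc.IH[of 0, OF le0]] by simp
      have e: "x (n*k + n) = X (Suc k)"
      proof -
        have "x (n*k + n) = A ^\<^sub>m n *\<^sub>v x (n*k) + zz A B (\<lambda>s. u (n*k+s)) n"
          unfolding x_def by (rule xt_shift[OF A B X0])
        also have "zz A B (\<lambda>s. u (n*k+s)) n = zz A B (blk nu (U k)) n"
          by (rule zz_cong) (simp add: ublk)
        also have "\<dots> = rep_B n A B *\<^sub>v U k" by (rule rep_B_mult[OF A B Uc, symmetric])
        finally show ?thesis using Xs[of k] IH by simp
      qed
      have XS: "X (Suc k) = x (n * Suc k)" using e by (simp add: add.commute)
      have "x (n * Suc k + r) = A ^\<^sub>m r *\<^sub>v x (n * Suc k) + zz A B (\<lambda>s. u (n * Suc k + s)) r"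
        unfolding x_def by (rule xt_shift[OF A B X0])
      also have "zz A B (\<lambda>s. u (n * Suc k + s)) r = zz A B (blk nu (U (Suc k))) r"
      proof (rule zz_cong)
        fix s assume "s < r" hence "s < n" using Suc.prems by simp
        thus "u (n * Suc k + s) = blk nu (U (Suc k)) s" by (rule ublk)
      qed
      finally show ?case using XS by simp
    qed
    have yblk: "y (n*k + r) = blk ny (Y k) r" if "r < n" for k r
    proof -
      have "blk ny (Y k) r = C *\<^sub>v (A ^\<^sub>m r *\<^sub>v X k + zz A B (blk nu (U k)) r) + D *\<^sub>v blk nu (U k) r"
        unfolding Ys by (rule rep_out[OF A B C D Xc Uc that])
      also have "\<dots> = y (n*k + r)" using conjunct1[OF xk[of r k]] that ublk[OF that, of k] by (simp add: y_def)
      finally show ?thesis by simp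
    qed
    have TR: "lti_traj A B C D phi x y u"
      unfolding lti_traj_def
    proof (intro allI conjI)
      fix t
      show "x (Suc t) = A *\<^sub>v x t + B *\<^sub>v u t" by (simp add: x_def)
      show "y t = C *\<^sub>v x t + D *\<^sub>v u t" by (simp add: y_def)
      have t: "t = n * (t div n) + t mod n" by simp
      have tm: "t mod n < n" using n0 by simp
      have "u t = blk nu (U (t div n)) (t mod n)" by (simp add: u_def)
      also have "\<dots> = phi (blk ny (Y (t div n)) (t mod n))"
        unfolding Us by (rule blk_rep_phi[OF ph tm])
      also have "blk ny (Y (t div n)) (t mod n) = y t"
        using yblk[OF tm, of "t div n"] t by simp
      finally show "u t = phi (y t)" .
    qed
    have x0c: "x 0 \<in> carrier_vec nx" using X0 by (simp add: x_def)
    from conv[OF x0c TR] have ly: "vec_lim y ys" and lu: "vec_lim u us" and lx: "vec_lim x xs" by auto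
    show ?thesis
    proof (intro conjI)
      show "vec_lim Y (stack n ys)" unfolding vec_lim_def
      proof (intro allI impI)
        fix i assume "i < dim_vec (stack n ys)"
        hence i: "i < n * ny" by (simp add: stack_def ysd)
        hence ny0: "ny > 0" by (cases ny) auto
        define r a where "r = i div ny" and "a = i mod ny"
        have r: "r < n" using i unfolding r_def by (simp add: less_mult_imp_div_less)
        have a: "a < ny" using ny0 unfolding a_def by simp
        have ie: "i = r*ny + a" unfolding r_def a_def by simp
        have eq: "Y k $ i = y (n*k + r) $ a" for k
          using yblk[OF r, of k] a by (simp add: blk_def ie)
        have "(\<lambda>t. y t $ a) \<longlonglongrightarrow> ys $ a" using ly a ysd unfolding vec_lim_def by auto
        from sub_lim[OF this n1, of r] have "(\<lambda>k. Y k $ i) \<longlonglongrightarrow> ys $ a" by (simp add: eq)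
        moreover have "stack n ys $ i = ys $ a" using i by (simp add: stack_def ysd a_def)
        ultimately show "(\<lambda>k. Y k $ i) \<longlonglongrightarrow> stack n ys $ i" by simp
      qed
      show "vec_lim U (stack n us)" unfolding vec_lim_def
      proof (intro allI impI)
        fix i assume "i < dim_vec (stack n us)"
        hence i: "i < n * nu" by (simp add: stack_def usd)
        hence nu0: "nu > 0" by (cases nu) auto
        define r a where "r = i div nu" and "a = i mod nu"
        have r: "r < n" using i unfolding r_def by (simp add: less_mult_imp_div_less)
        have a: "a < nu" using nu0 unfolding a_def by simp
        have ie: "i = r*nu + a" unfolding r_def a_def by simp
        have eq: "U k $ i = u (n*k + r) $ a" for k
          using ublk[OF r, of k] a by (simp add: blk_def ie)
        have "(\<lambda>t. u t $ a) \<longlonglongrightarrow> us $ a" using lu a usd unfolding vec_lim_def by auto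
        from sub_lim[OF this n1, of r] have "(\<lambda>k. U k $ i) \<longlonglongrightarrow> us $ a" by (simp add: eq)
        moreover have "stack n us $ i = us $ a" using i by (simp add: stack_def usd a_def)
        ultimately show "(\<lambda>k. U k $ i) \<longlonglongrightarrow> stack n us $ i" by simp
      qed
      show "vec_lim X xs" unfolding vec_lim_def
      proof (intro allI impI)
        fix i assume i: "i < dim_vec xs"
        have eq: "X k $ i = x (n*k + 0) $ i" for k
        proof -
          have "X k = x (n*k)" by (rule conjunct2[OF xk[of 0 k, OF le0]])
          thus ?thesis by simp
        qed
        have "(\<lambda>t. x t $ i) \<longlonglongrightarrow> xs $ i" using lx i unfolding vec_lim_def by auto
        from sub_lim[OF this n1, of 0] show "(\<lambda>k. X k $ i) \<longlonglongrightarrow> xs $ i" by (simp add: eq)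
      qed
    qed
  qed
  show ?thesis unfolding lti_converges_def using FIX CONV by blast
qed

end
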